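(* Let $A$ be a non-empty set and $N$ a submagma of the free magma $\mathbb{M}_A$. Then $N$ is closed if and only if $\mathcal{G}(N)\subseteq A$. In particular, the closed submagmas of $\mathbb{M}_A$ are exactly the submagmas $\mathbb{M}_B=\langle B\rangle$ with $B\subseteq A$.
   Context: $\mathbb{M}_A$ is the free magma on $A$ (non-associative words over $A$, with $x+y=(x,y)$); for $B\subseteq A$, $\mathbb{M}_B=\langle B\rangle$ is the submagma generated by $B$ (empty if $B=\emptyset$). A subset $X$ of a magma $M$ is closed if $x+y\in X$ implies $x,y\in X$. For a submagma $N\subseteq\mathbb{M}_A$, $\mathcal{G}(N)$ is the unique minimal generating set of $N$, namely the set of elements of $N$ that cannot be written as $x+y$ with $x,y\in N$ ($\mathcal{G}(\emptyset)=\emptyset$). *)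

theory Defs
  imports Main
begin

datatype 'a mag = Gen 'a | Op "'a mag" "'a mag"

definition free_magma :: "'a set \<Rightarrow> 'a mag set" where
  "free_magma A = {x. set_mag x \<subseteq> A}"

definition submagma :: "'a set \<Rightarrow> 'a mag set \<Rightarrow> bool" where
  "submagma A N \<longleftrightarrow> N \<subseteq> free_magma A \<and> (\<forall>x\<in>N. \<forall>y\<in>N. Op x y \<in> N)"

inductive_set generated :: "'a mag set \<Rightarrow> 'a mag set" for S where
  gen_base: "x \<in> S \<Longrightarrow> x \<in> generated S"
| gen_op: "x \<in> generated S \<Longrightarrow> y \<in> generated S \<Longrightarrow> Op x y \<in> generated S"

definition closed_in_magma :: "'a set \<Rightarrow> 'a mag set \<Rightarrow> bool" where
  "closed_in_magma A X \<longleftrightarrow> (\<forall>x\<in>free_magma A. \<forall>y\<in>free_magma A. Op x y \<in> X \<longrightarrow> x \<in> X \<and> y \<in> X)"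

definition min_gen :: "'a mag set \<Rightarrow> 'a mag set" where
  "min_gen N = {z \<in> N. \<not> (\<exists>x\<in>N. \<exists>y\<in>N. z = Op x y)}"

end

theory Submission
  imports Defs
begin

lemma gen_sub:
  assumes "submagma A N" "z \<in> N"
  shows "z \<in> generated (min_gen N)"
  using assms(2)
proof (induction z)
  case (Gen a)
  then show ?case by (auto simp: min_gen_def intro: generated.gen_base)
next
  case (Op x y)
  show ?case
  proof (cases "Op x y \<in> min_gen N")
    case True then show ?thesis by (rule generated.gen_base)
  next
    case False
    then have "x \<in> N" "y \<in> N" using Op.prems by (auto simp: min_gen_def)
    then show ?thesis using Op.IH by (auto intro: generated.gen_op)
  qed
qed

lemma gen_sub2:
  assumes "submagma A N" "z \<in> generated (min_gen N)"
  shows "z \<in> N"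
  using assms(2)
  by (induction z rule: generated.induct)
     (use assms(1) in \<open>auto simp: min_gen_def submagma_def\<close>)

lemma s1:
  assumes "submagma A N" "closed_in_magma A N"
  shows "min_gen N \<subseteq> Gen ` A"
proof
  fix z assume z: "z \<in> min_gen N"
  then have zN: "z \<in> N" by (simp add: min_gen_def)
  then have zA: "set_mag z \<subseteq> A" using assms(1) by (auto simp: submagma_def free_magma_def)
  show "z \<in> Gen ` A"
  proof (cases z)
    case (Gen a) then show ?thesis using zA by auto
  next
    case (Op x y)
    then have "x \<in> N \<and> y \<in> N" using assms(2) zN zA
      unfolding closed_in_magma_def free_magma_def by auto
    then show ?thesis using z Op by (auto simp: min_gen_def)
  qed
qed

lemma s2:
  assumes "submagma A N" "min_gen N \<subseteq> Gen ` A"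
  shows "\<exists>B \<subseteq> A. N = generated (Gen ` B)"
proof -
  define B where "B = {a \<in> A. Gen a \<in> N}"
  have "min_gen N = Gen ` B"
    using assms(2) by (auto simp: B_def min_gen_def)
  moreover have "N = generated (min_gen N)"
    using gen_sub[OF assms(1)] gen_sub2[OF assms(1)] by blast
  ultimately show ?thesis unfolding B_def by (metis (no_types, lifting) mem_Collect_eq subsetI)
qed

lemma s3:
  assumes "N = generated (Gen ` B)"
  shows "closed_in_magma A N"
  unfolding closed_in_magma_def assms
proof (intro ballI impI)
  fix x y assume "Op x y \<in> generated (Gen ` B)"
  then show "x \<in> generated (Gen ` B) \<and> y \<in> generated (Gen ` B)"
    by (cases rule: generated.cases) auto
qed

theorem lemma6p2:
  fixes A :: "'a set" and N :: "'a mag set"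
  assumes "A \<noteq> {}" and "submagma A N"
  shows "(closed_in_magma A N \<longleftrightarrow> min_gen N \<subseteq> Gen ` A)
    \<and> (closed_in_magma A N \<longleftrightarrow> (\<exists>B \<subseteq> A. N = generated (Gen ` B)))"
  using s1[OF assms(2)] s2[OF assms(2)] s3 by blast

end
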